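(* For every $1$-cycle $\gamma\in C_1^{BM}(\Gamma)$ (i.e. $d\gamma=0$) and every choice of bijections $\alpha=\{\alpha_x\}_{x\in X}$, the operator $U_\gamma=U^{(\alpha)}_\gamma$ is unitary and $U_\gamma-1\in C^*(X)$.
   Context: Let $\Gamma$ be a connected, locally finite graph with vertex set $X$ and edge set $\Gamma^1$, edges oriented from $s(e)$ to $t(e)$, and $X$ with the path metric (edges of length $1$). Fix a separable infinite-dimensional Hilbert space $H$. The Roe algebra $C^*(X)$ is the norm closure of the $*$-algebra of locally compact (i.e. $TM_f$, $M_fT$ compact for every finitely supported $f$, $M_f$ multiplication by $f$) finite-propagation (there is $R$ with $M_fTM_g=0$ whenever the supports of $f,g$ are at distance $>R$) operators on $\ell^2(X)\otimes H$. $C_1^{BM}(\Gamma)$ is the group of formal sums $\gamma=\sum_{e\in\Gamma^1}\gamma_e e$, $\gamma_e\in\mathbb Z$, and $d(e)=t(e)-s(e)$. Construction of $U_\gamma$: after reversing the orientation of each edge with $\gamma_e<0$ (and replacing $\gamma_e$ by $-\gamma_e$), assume all $\gamma_e\ge0$. Let $G$ be the oriented multigraph with vertex set $X$ in which each edge $e$ of $\Gamma$ is replaced by $\gamma_e$ parallel edges from $s(e)$ to $t(e)$. For $x\in X$ let $I(x)=\{e\in G^1:t(e)=x\}$ and $O(x)=\{e\in G^1:s(e)=x\}$; $d\gamma=0$ means $|I(x)|=|O(x)|$ for all $x$, and we fix bijections $\alpha_x:I(x)\to O(x)$. Fix an orthonormal basis of $H$ containing vectors $\varepsilon_e$, $e\in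 G^1$ (possibly together with further basis vectors $\eta$). Define $F:X\times G^1\to X\times G^1$ by $F(x,e)=(t(\alpha_x(e)),\alpha_x(e))$ if $t(e)=x$ and $F(x,e)=(x,e)$ otherwise, and define $U_\gamma$ on $\ell^2(X)\otimes H$ by $U_\gamma(\delta_x\otimes\varepsilon_e)=\delta_{y}\otimes\varepsilon_{e'}$ where $(y,e')=F(x,e)$, and $U_\gamma(\delta_x\otimes\eta)=\delta_x\otimes\eta$ for the remaining basis vectors $\eta$. *)

theory Defs
  imports "HOL-Analysis.Analysis"
begin

text \<open>Vertices are the elements of type 'v (so X = UNIV), edges the elements of type 'e,
  with source map s and target map t.\<close>

definition locally_finite_graph :: "('e \<Rightarrow> 'v) \<Rightarrow> ('e \<Rightarrow> 'v) \<Rightarrow> bool" where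
  "locally_finite_graph s t \<longleftrightarrow> (\<forall>x. finite {e. s e = x \<or> t e = x})"

definition adj_rel :: "('e \<Rightarrow> 'v) \<Rightarrow> ('e \<Rightarrow> 'v) \<Rightarrow> ('v \<times> 'v) set" where
  "adj_rel s t = {(x, y). \<exists>e. (s e = x \<and> t e = y) \<or> (s e = y \<and> t e = x)}"

definition connected_graph :: "('e \<Rightarrow> 'v) \<Rightarrow> ('e \<Rightarrow> 'v) \<Rightarrow> bool" where
  "connected_graph s t \<longleftrightarrow> (\<forall>x y. (x, y) \<in> (adj_rel s t)\<^sup>*)"

definition gdist :: "('e \<Rightarrow> 'v) \<Rightarrow> ('e \<Rightarrow> 'v) \<Rightarrow> 'v \<Rightarrow> 'v \<Rightarrow> nat" where
  "gdist s t x y = (LEAST n. (x, y) \<in> (adj_rel s t) ^^ n)"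

text \<open>A 1-chain is an arbitrary (not necessarily finitely supported) integer function on edges.
  Its boundary: (d gamma)(x) = sum over edges into x minus sum over edges out of x.\<close>
definition boundary :: "('e \<Rightarrow> 'v) \<Rightarrow> ('e \<Rightarrow> 'v) \<Rightarrow> ('e \<Rightarrow> int) \<Rightarrow> 'v \<Rightarrow> int" where
  "boundary s t \<gamma> x = (\<Sum>e\<in>{e. t e = x}. \<gamma> e) - (\<Sum>e\<in>{e. s e = x}. \<gamma> e)"

definition is_cycle :: "('e \<Rightarrow> 'v) \<Rightarrow> ('e \<Rightarrow> 'v) \<Rightarrow> ('e \<Rightarrow> int) \<Rightarrow> bool" where
  "is_cycle s t \<gamma> \<longleftrightarrow> (\<forall>x. boundary s t \<gamma> x = 0)"

definition G1 :: "('e \<Rightarrow> int) \<Rightarrow> ('e \<times> nat) set" where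
  "G1 \<gamma> = {(e, k). k < nat \<bar>\<gamma> e\<bar>}"

definition Gsrc :: "('e \<Rightarrow> 'v) \<Rightarrow> ('e \<Rightarrow> 'v) \<Rightarrow> ('e \<Rightarrow> int) \<Rightarrow> 'e \<times> nat \<Rightarrow> 'v" where
  "Gsrc s t \<gamma> g = (if \<gamma> (fst g) \<ge> 0 then s (fst g) else t (fst g))"

definition Gtgt :: "('e \<Rightarrow> 'v) \<Rightarrow> ('e \<Rightarrow> 'v) \<Rightarrow> ('e \<Rightarrow> int) \<Rightarrow> 'e \<times> nat \<Rightarrow> 'v" where
  "Gtgt s t \<gamma> g = (if \<gamma> (fst g) \<ge> 0 then t (fst g) else s (fst g))"

definition Iset :: "('e \<Rightarrow> 'v) \<Rightarrow> ('e \<Rightarrow> 'v) \<Rightarrow> ('e \<Rightarrow> int) \<Rightarrow> 'v \<Rightarrow> ('e \<times> nat) set" where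
  "Iset s t \<gamma> x = {g \<in> G1 \<gamma>. Gtgt s t \<gamma> g = x}"

definition Oset :: "('e \<Rightarrow> 'v) \<Rightarrow> ('e \<Rightarrow> 'v) \<Rightarrow> ('e \<Rightarrow> int) \<Rightarrow> 'v \<Rightarrow> ('e \<times> nat) set" where
  "Oset s t \<gamma> x = {g \<in> G1 \<gamma>. Gsrc s t \<gamma> g = x}"

text \<open>H = l^2(nat) with its standard orthonormal basis; l^2(X) \<otimes> H is identified with
  l^2(X \<times> nat), delta_x \<otimes> delta_n corresponding to the point mass at (x,n).\<close>

type_synonym 'v vec = "'v \<times> nat \<Rightarrow> complex"
type_synonym 'v op = "'v vec \<Rightarrow> 'v vec"

definition is_l2 :: "'v vec \<Rightarrow> bool" where
  "is_l2 f \<longleftrightarrow> (\<lambda>i. (cmod (f i))\<^sup>2) summable_on UNIV"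

definition l2norm :: "'v vec \<Rightarrow> real" where
  "l2norm f = sqrt (infsum (\<lambda>i. (cmod (f i))\<^sup>2) UNIV)"

definition l2inner :: "'v vec \<Rightarrow> 'v vec \<Rightarrow> complex" where
  "l2inner f g = infsum (\<lambda>i. f i * cnj (g i)) UNIV"

definition bounded_op :: "'v op \<Rightarrow> bool" where
  "bounded_op T \<longleftrightarrow>
     (\<forall>f. is_l2 f \<longrightarrow> is_l2 (T f)) \<and>
     (\<forall>f g c. is_l2 f \<longrightarrow> is_l2 g \<longrightarrow> T (\<lambda>i. c * f i + g i) = (\<lambda>i. c * T f i + T g i)) \<and>
     (\<exists>C. \<forall>f. is_l2 f \<longrightarrow> l2norm (T f) \<le> C * l2norm f)"

definition opnorm :: "'v op \<Rightarrow> real" where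
  "opnorm T = Sup {l2norm (T f) | f. is_l2 f \<and> l2norm f \<le> 1}"

definition op_diff :: "'v op \<Rightarrow> 'v op \<Rightarrow> 'v op" where
  "op_diff S T = (\<lambda>f i. S f i - T f i)"

definition unitary_op :: "'v op \<Rightarrow> bool" where
  "unitary_op U \<longleftrightarrow> bounded_op U \<and>
     (\<exists>V. bounded_op V \<and>
        (\<forall>f g. is_l2 f \<longrightarrow> is_l2 g \<longrightarrow> l2inner (U f) g = l2inner f (V g)) \<and>
        (\<forall>f. is_l2 f \<longrightarrow> V (U f) = f) \<and>
        (\<forall>f. is_l2 f \<longrightarrow> U (V f) = f))"

definition compact_op :: "'v op \<Rightarrow> bool" where
  "compact_op T \<longleftrightarrow> bounded_op T \<and>
     (\<forall>(f :: nat \<Rightarrow> 'v vec) B. (\<forall>n. is_l2 (f n) \<and> l2norm (f n) \<le> B) \<longrightarrow>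
        (\<exists>r g. strict_mono r \<and> is_l2 g \<and>
              (\<lambda>n. l2norm (\<lambda>i. T (f (r n)) i - g i)) \<longlonglongrightarrow> 0))"

definition mult_op :: "('v \<Rightarrow> complex) \<Rightarrow> 'v op" where
  "mult_op \<phi> = (\<lambda>f (x, n). \<phi> x * f (x, n))"

definition locally_compact_op :: "'v op \<Rightarrow> bool" where
  "locally_compact_op T \<longleftrightarrow>
     (\<forall>\<phi>. finite {x. \<phi> x \<noteq> 0} \<longrightarrow> compact_op (T \<circ> mult_op \<phi>) \<and> compact_op (mult_op \<phi> \<circ> T))"

definition finite_propagation_op :: "('e \<Rightarrow> 'v) \<Rightarrow> ('e \<Rightarrow> 'v) \<Rightarrow> 'v op \<Rightarrow> bool" where
  "finite_propagation_op s t T \<longleftrightarrow>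
     (\<exists>R::nat. \<forall>\<phi> \<psi>. bounded (range \<phi>) \<longrightarrow> bounded (range \<psi>) \<longrightarrow>
        (\<forall>x y. \<phi> x \<noteq> 0 \<longrightarrow> \<psi> y \<noteq> 0 \<longrightarrow> gdist s t x y > R) \<longrightarrow>
        (\<forall>f. is_l2 f \<longrightarrow> mult_op \<phi> (T (mult_op \<psi> f)) = (\<lambda>_. 0)))"

definition roe_algebra :: "('e \<Rightarrow> 'v) \<Rightarrow> ('e \<Rightarrow> 'v) \<Rightarrow> 'v op set" where
  "roe_algebra s t = {T. bounded_op T \<and>
     (\<forall>\<epsilon>>0. \<exists>S. bounded_op S \<and> locally_compact_op S \<and> finite_propagation_op s t S \<and>
        opnorm (op_diff T S) < \<epsilon>)}"

text \<open>eps is an injection of G^1 into the standard basis index set nat of H (the basis vectors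
  epsilon_e); the remaining standard basis vectors play the role of the eta's.\<close>
definition Fmap :: "('e \<Rightarrow> 'v) \<Rightarrow> ('e \<Rightarrow> 'v) \<Rightarrow> ('e \<Rightarrow> int) \<Rightarrow> ('v \<Rightarrow> 'e \<times> nat \<Rightarrow> 'e \<times> nat)
                    \<Rightarrow> ('e \<times> nat \<Rightarrow> nat) \<Rightarrow> 'v \<times> nat \<Rightarrow> 'v \<times> nat" where
  "Fmap s t \<gamma> \<alpha> \<epsilon> p =
     (let x = fst p; n = snd p in
      if n \<in> \<epsilon> ` G1 \<gamma> then
        (let g = inv_into (G1 \<gamma>) \<epsilon> n in
         if Gtgt s t \<gamma> g = x then (Gtgt s t \<gamma> (\<alpha> x g), \<epsilon> (\<alpha> x g)) else (x, n))
      else (x, n))"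

text \<open>U_gamma sends the basis vector at p to the basis vector at Fmap p, extended linearly:
  (U f)(q) = sum of f over the preimage of q.\<close>
definition U_gamma :: "('e \<Rightarrow> 'v) \<Rightarrow> ('e \<Rightarrow> 'v) \<Rightarrow> ('e \<Rightarrow> int) \<Rightarrow> ('v \<Rightarrow> 'e \<times> nat \<Rightarrow> 'e \<times> nat)
                    \<Rightarrow> ('e \<times> nat \<Rightarrow> nat) \<Rightarrow> 'v op" where
  "U_gamma s t \<gamma> \<alpha> \<epsilon> = (\<lambda>f q. infsum f {p. Fmap s t \<gamma> \<alpha> \<epsilon> p = q})"

end

theory Submission
  imports Defs
begin

lemma l2_finite_support:
  assumes "finite S" "\<And>q. q \<notin> S \<Longrightarrow> f q = 0"
  shows "is_l2 f" "l2norm f = sqrt (\<Sum>q\<in>S. (cmod (f q))\<^sup>2)"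
proof -
  have "(\<lambda>i. (cmod (f i))\<^sup>2) summable_on UNIV \<longleftrightarrow> (\<lambda>i. (cmod (f i))\<^sup>2) summable_on S"
    by (rule summable_on_cong_neutral) (use assms in auto)
  then show "is_l2 f" using assms unfolding is_l2_def by simp
  have "infsum (\<lambda>i. (cmod (f i))\<^sup>2) UNIV = infsum (\<lambda>i. (cmod (f i))\<^sup>2) S"
    by (rule infsum_cong_neutral) (use assms in auto)
  then show "l2norm f = sqrt (\<Sum>q\<in>S. (cmod (f q))\<^sup>2)" using assms unfolding l2norm_def by simp
qed

lemma l2_point_le:
  assumes "is_l2 f"
  shows "cmod (f p) \<le> l2norm f"
proof -
  have "infsum (\<lambda>i. (cmod (f i))\<^sup>2) {p} \<le> infsum (\<lambda>i. (cmod (f i))\<^sup>2) UNIV"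
    by (rule infsum_mono_neutral) (use assms in \<open>auto simp: is_l2_def\<close>)
  then have "(cmod (f p))\<^sup>2 \<le> infsum (\<lambda>i. (cmod (f i))\<^sup>2) UNIV" by simp
  then show ?thesis unfolding l2norm_def using real_le_rsqrt by blast
qed

lemma l2norm_nonneg: "l2norm f \<ge> 0"
  unfolding l2norm_def by (intro real_sqrt_ge_zero infsum_nonneg) auto

lemma l2_reindex:
  assumes "bij H"
  shows "is_l2 (\<lambda>q. f (H q)) \<longleftrightarrow> is_l2 f" "l2norm (\<lambda>q. f (H q)) = l2norm f"
  unfolding is_l2_def l2norm_def
  using summable_on_reindex_bij_betw[OF assms, of "\<lambda>i. (cmod (f i))\<^sup>2"]
    infsum_reindex_bij_betw[OF assms, of "\<lambda>i. (cmod (f i))\<^sup>2"] by auto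

lemma extract_subseq:
  fixes h :: "nat \<Rightarrow> 'a \<Rightarrow> complex"
  assumes "finite S"
  shows "(\<forall>n q. cmod (h n q) \<le> B) \<Longrightarrow> \<exists>r g. strict_mono r \<and> (\<forall>q\<in>S. (\<lambda>n. h (r n) q) \<longlonglongrightarrow> g q)"
  using assms
proof (induction S arbitrary: h rule: finite_induct)
  case empty
  then show ?case by (intro exI[of _ id]) (auto simp: strict_mono_def)
next
  case (insert a S)
  obtain r1 g1 where r1: "strict_mono r1" "\<forall>q\<in>S. (\<lambda>n. h (r1 n) q) \<longlonglongrightarrow> g1 q"
    using insert by blast
  have "bounded (range (\<lambda>n. h (r1 n) a))"
    using insert.prems by (auto simp: bounded_iff)
  then obtain l r2 where r2: "strict_mono r2" "((\<lambda>n. h (r1 n) a) \<circ> r2) \<longlonglongrightarrow> l"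
    using bounded_imp_convergent_subsequence by blast
  show ?case
  proof (intro exI conjI ballI)
    show "strict_mono (r1 \<circ> r2)" using r1 r2 strict_mono_o by blast
    fix q assume "q \<in> insert a S"
    then show "(\<lambda>n. h ((r1 \<circ> r2) n) q) \<longlonglongrightarrow> (g1(a := l)) q"
    proof
      assume "q = a" then show ?thesis using r2 by (simp add: o_def)
    next
      assume q: "q \<in> S"
      then have "q \<noteq> a" using insert by auto
      have "((\<lambda>n. h (r1 n) q) \<circ> r2) \<longlonglongrightarrow> g1 q"
        using LIMSEQ_subseq_LIMSEQ r1 r2 q by blast
      then show ?thesis using \<open>q \<noteq> a\<close> by (simp add: o_def)
    qed
  qed
qed

lemma compact_fin:
  fixes W :: "'v op"
  assumes S: "finite S"
    and zero: "\<And>f q. q \<notin> S \<Longrightarrow> W f q = 0"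
    and bnd: "\<And>f q. cmod (W f q) \<le> K * (cmod (f (H q)) + cmod (f q))"
    and K: "K \<ge> 0"
    and lin: "\<And>f g c. W (\<lambda>i. c * f i + g i) = (\<lambda>i. c * W f i + W g i)"
  shows "compact_op W"
proof -
  have pt: "cmod (W f q) \<le> 2 * K * l2norm f" if "is_l2 f" for f q
  proof -
    have "cmod (W f q) \<le> K * (cmod (f (H q)) + cmod (f q))" by (rule bnd)
    also have "\<dots> \<le> K * (l2norm f + l2norm f)"
      using l2_point_le[OF that] K by (intro mult_left_mono add_mono) auto
    finally show ?thesis by simp
  qed
  have l2W: "is_l2 (W f)" for f using l2_finite_support(1)[OF S, of "W f"] zero by blast
  have nW: "l2norm (W f) = sqrt (\<Sum>q\<in>S. (cmod (W f q))\<^sup>2)" for f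
    using l2_finite_support(2)[OF S, of "W f"] zero by blast
  have bd: "l2norm (W f) \<le> (sqrt (card S) * (2 * K)) * l2norm f" if "is_l2 f" for f
  proof -
    have "(\<Sum>q\<in>S. (cmod (W f q))\<^sup>2) \<le> (\<Sum>q\<in>S. (2 * K * l2norm f)\<^sup>2)"
      using pt[OF that] by (intro sum_mono power_mono) auto
    also have "\<dots> = (sqrt (card S) * (2 * K) * l2norm f)\<^sup>2"
      by (simp add: power_mult_distrib)
    finally have "sqrt (\<Sum>q\<in>S. (cmod (W f q))\<^sup>2) \<le> sqrt ((sqrt (card S) * (2 * K) * l2norm f)\<^sup>2)"
      using real_sqrt_le_mono by blast
    also have "\<dots> = sqrt (card S) * (2 * K) * l2norm f"
      using K l2norm_nonneg[of f] by simp
    finally show ?thesis using nW by simp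
  qed
  have "bounded_op W" unfolding bounded_op_def using l2W lin bd by blast
  moreover have "\<exists>r g. strict_mono r \<and> is_l2 g \<and> (\<lambda>n. l2norm (\<lambda>i. W (f (r n)) i - g i)) \<longlonglongrightarrow> 0"
    if f: "\<forall>n. is_l2 (f n) \<and> l2norm (f n) \<le> B" for f :: "nat \<Rightarrow> 'v vec" and B
  proof -
    have "\<forall>n q. cmod (W (f n) q) \<le> 2 * K * B"
    proof (intro allI)
      fix n q
      have "cmod (W (f n) q) \<le> 2 * K * l2norm (f n)" using pt f by blast
      also have "\<dots> \<le> 2 * K * B" using f K by (intro mult_left_mono) auto
      finally show "cmod (W (f n) q) \<le> 2 * K * B" .
    qed
    then obtain r g where r: "strict_mono r" "\<forall>q\<in>S. (\<lambda>n. W (f (r n)) q) \<longlonglongrightarrow> g q"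
      using extract_subseq[OF S, of "\<lambda>n. W (f n)"] by blast
    define g' where "g' q = (if q \<in> S then g q else 0)" for q
    have z: "\<And>q. q \<notin> S \<Longrightarrow> W (f (r n)) q - g' q = 0" for n using zero by (simp add: g'_def)
    have "is_l2 g'" using l2_finite_support[OF S, of g'] by (auto simp: g'_def)
    moreover have "(\<lambda>n. l2norm (\<lambda>i. W (f (r n)) i - g' i)) \<longlonglongrightarrow> 0"
    proof -
      have eq: "l2norm (\<lambda>i. W (f (r n)) i - g' i) = sqrt (\<Sum>q\<in>S. (cmod (W (f (r n)) q - g' q))\<^sup>2)" for n
        using l2_finite_support(2)[OF S z] by simp
      have "(\<lambda>n. W (f (r n)) q - g' q) \<longlonglongrightarrow> 0" if "q \<in> S" for q
        using r(2) that by (simp add: g'_def LIM_zero)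
      then have "(\<lambda>n. (\<Sum>q\<in>S. (cmod (W (f (r n)) q - g' q))\<^sup>2)) \<longlonglongrightarrow> (\<Sum>q\<in>S. (cmod 0)\<^sup>2)"
        by (intro tendsto_sum tendsto_power tendsto_norm) auto
      then have "(\<lambda>n. sqrt (\<Sum>q\<in>S. (cmod (W (f (r n)) q - g' q))\<^sup>2)) \<longlonglongrightarrow> sqrt 0"
        by (intro tendsto_real_sqrt) simp
      then show ?thesis using eq by simp
    qed
    ultimately show ?thesis using r by blast
  qed
  ultimately show ?thesis unfolding compact_op_def by blast
qed

locale ug_setup =
  fixes s t :: "'e \<Rightarrow> 'v" and \<gamma> :: "'e \<Rightarrow> int"
    and \<alpha> :: "'v \<Rightarrow> 'e \<times> nat \<Rightarrow> 'e \<times> nat" and \<epsilon> :: "'e \<times> nat \<Rightarrow> nat"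
  assumes lf: "locally_finite_graph s t"
    and abij: "\<forall>x. bij_betw (\<alpha> x) (Iset s t \<gamma> x) (Oset s t \<gamma> x)"
    and einj: "inj_on \<epsilon> (G1 \<gamma>)"
begin

definition "F = Fmap s t \<gamma> \<alpha> \<epsilon>"
definition "\<iota> g = (Gtgt s t \<gamma> g, \<epsilon> g)"
definition "\<beta> g = \<alpha> (Gtgt s t \<gamma> g) g"
definition "P = \<iota> ` G1 \<gamma>"

lemma \<beta>_props:
  assumes "g \<in> G1 \<gamma>"
  shows "\<beta> g \<in> G1 \<gamma>" "Gsrc s t \<gamma> (\<beta> g) = Gtgt s t \<gamma> g"
proof -
  have "g \<in> Iset s t \<gamma> (Gtgt s t \<gamma> g)" using assms by (simp add: Iset_def)
  then have "\<beta> g \<in> Oset s t \<gamma> (Gtgt s t \<gamma> g)"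
    using abij bij_betwE unfolding \<beta>_def by blast
  then show "\<beta> g \<in> G1 \<gamma>" "Gsrc s t \<gamma> (\<beta> g) = Gtgt s t \<gamma> g" by (auto simp: Oset_def)
qed

lemma \<beta>_inj: "inj_on \<beta> (G1 \<gamma>)"
proof (rule inj_onI)
  fix g g' assume g: "g \<in> G1 \<gamma>" "g' \<in> G1 \<gamma>" and eq: "\<beta> g = \<beta> g'"
  have x: "Gtgt s t \<gamma> g = Gtgt s t \<gamma> g'" using \<beta>_props(2)[OF g(1)] \<beta>_props(2)[OF g(2)] eq by simp
  have "g \<in> Iset s t \<gamma> (Gtgt s t \<gamma> g)" "g' \<in> Iset s t \<gamma> (Gtgt s t \<gamma> g)"
    using g x by (auto simp: Iset_def)
  moreover have "inj_on (\<alpha> (Gtgt s t \<gamma> g)) (Iset s t \<gamma> (Gtgt s t \<gamma> g))"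
    using abij bij_betw_imp_inj_on by blast
  ultimately show "g = g'" using eq x unfolding \<beta>_def by (metis inj_onD)
qed

lemma \<beta>_surj: "g' \<in> G1 \<gamma> \<Longrightarrow> \<exists>g\<in>G1 \<gamma>. \<beta> g = g'"
proof -
  assume g': "g' \<in> G1 \<gamma>"
  let ?x = "Gsrc s t \<gamma> g'"
  have "g' \<in> Oset s t \<gamma> ?x" using g' by (simp add: Oset_def)
  then obtain g where g: "g \<in> Iset s t \<gamma> ?x" "\<alpha> ?x g = g'"
    using abij bij_betw_imp_surj_on by (metis imageE)
  then show ?thesis unfolding \<beta>_def Iset_def by (metis (mono_tags, lifting) mem_Collect_eq)
qed

lemma \<iota>_inj: "inj_on \<iota> (G1 \<gamma>)"
  using einj unfolding \<iota>_def inj_on_def by auto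

lemma F_P: "g \<in> G1 \<gamma> \<Longrightarrow> F (\<iota> g) = \<iota> (\<beta> g)"
  unfolding F_def Fmap_def \<iota>_def \<beta>_def using einj by (simp add: Let_def)

lemma F_out: "p \<notin> P \<Longrightarrow> F p = p"
proof -
  assume p: "p \<notin> P"
  obtain x n where pxn: "p = (x, n)" by fastforce
  show ?thesis
  proof (cases "n \<in> \<epsilon> ` G1 \<gamma>")
    case True
    then obtain g where g: "g \<in> G1 \<gamma>" "n = \<epsilon> g" by blast
    then have "inv_into (G1 \<gamma>) \<epsilon> n = g" using einj by simp
    moreover have "Gtgt s t \<gamma> g \<noteq> x" using p g pxn unfolding P_def \<iota>_def by auto
    ultimately show ?thesis using True unfolding F_def Fmap_def pxn by (simp add: Let_def)
  next
    case False
    then show ?thesis unfolding F_def Fmap_def pxn by (simp add: Let_def)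
  qed
qed

lemma F_bij: "bij F"
proof (rule bijI)
  show "inj F"
  proof (rule injI)
    fix p q assume eq: "F p = F q"
    show "p = q"
    proof (cases "p \<in> P"; cases "q \<in> P")
      assume "p \<in> P" "q \<in> P"
      then obtain g g' where g: "g \<in> G1 \<gamma>" "g' \<in> G1 \<gamma>" "p = \<iota> g" "q = \<iota> g'" unfolding P_def by blast
      then have "\<iota> (\<beta> g) = \<iota> (\<beta> g')" using eq F_P by simp
      then have "\<beta> g = \<beta> g'" using \<iota>_inj \<beta>_props g by (meson inj_onD)
      then show ?thesis using \<beta>_inj g by (metis inj_onD)
    next
      assume "p \<in> P" "q \<notin> P"
      then obtain g where g: "g \<in> G1 \<gamma>" "p = \<iota> g" unfolding P_def by blast
      then have "F p \<in> P" using F_P \<beta>_props unfolding P_def by simp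
      then show ?thesis using eq F_out \<open>q \<notin> P\<close> by simp
    next
      assume "p \<notin> P" "q \<in> P"
      then obtain g where g: "g \<in> G1 \<gamma>" "q = \<iota> g" unfolding P_def by blast
      then have "F q \<in> P" using F_P \<beta>_props unfolding P_def by simp
      then show ?thesis using eq F_out \<open>p \<notin> P\<close> by simp
    next
      assume "p \<notin> P" "q \<notin> P"
      then show ?thesis using eq F_out by simp
    qed
  qed
  show "surj F"
  proof -
    have "\<exists>p. q = F p" for q
    proof (cases "q \<in> P")
      case True
      then obtain g' where g': "g' \<in> G1 \<gamma>" "q = \<iota> g'" unfolding P_def by blast
      then obtain g where "g \<in> G1 \<gamma>" "\<beta> g = g'" using \<beta>_surj by blast
      then show ?thesis using F_P g' by metis
    next
      case False then show ?thesis using F_out by metis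
    qed
    then show ?thesis by (metis surjI)
  qed
qed

definition "H = inv F"

lemma H_props: "bij H" "F (H q) = q" "H (F p) = p"
  unfolding H_def using F_bij bij_imp_bij_inv bij_inv_eq_iff by (auto simp: bij_def surj_f_inv_f)

lemma U_eq: "U_gamma s t \<gamma> \<alpha> \<epsilon> = (\<lambda>f q. f (H q))"
proof (intro ext)
  fix f q
  have "{p. Fmap s t \<gamma> \<alpha> \<epsilon> p = q} = {H q}"
    unfolding F_def[symmetric] by (auto simp: H_props(2)) (metis H_props(3))
  then show "U_gamma s t \<gamma> \<alpha> \<epsilon> f q = f (H q)" unfolding U_gamma_def by simp
qed

lemma F_adj: "F p \<noteq> p \<Longrightarrow> (fst p, fst (F p)) \<in> adj_rel s t"
proof -
  assume "F p \<noteq> p"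
  then have "p \<in> P" using F_out by blast
  then obtain g where g: "g \<in> G1 \<gamma>" "p = \<iota> g" unfolding P_def by blast
  have Fp: "F p = \<iota> (\<beta> g)" using F_P g by simp
  have "fst p = Gsrc s t \<gamma> (\<beta> g)" using g \<beta>_props by (simp add: \<iota>_def)
  moreover have "fst (F p) = Gtgt s t \<gamma> (\<beta> g)" using Fp by (simp add: \<iota>_def)
  ultimately show ?thesis unfolding adj_rel_def Gsrc_def Gtgt_def
    by (cases "0 \<le> \<gamma> (fst (\<beta> g))") auto
qed

lemma finite_moved: "finite A \<Longrightarrow> finite {p. fst p \<in> A \<and> F p \<noteq> p}"
proof -
  assume A: "finite A"
  let ?E = "\<Union>x\<in>A. {e. s e = x \<or> t e = x}"
  have fE: "finite ?E" using A lf unfolding locally_finite_graph_def by blast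
  have "{g \<in> G1 \<gamma>. Gtgt s t \<gamma> g \<in> A} \<subseteq> Sigma ?E (\<lambda>e. {..<nat \<bar>\<gamma> e\<bar>})"
    unfolding G1_def Gtgt_def by (auto split: if_splits)
  then have fG: "finite {g \<in> G1 \<gamma>. Gtgt s t \<gamma> g \<in> A}"
    using fE by (meson finite_SigmaI finite_lessThan finite_subset)
  have "{p. fst p \<in> A \<and> F p \<noteq> p} \<subseteq> \<iota> ` {g \<in> G1 \<gamma>. Gtgt s t \<gamma> g \<in> A}"
  proof
    fix p assume p: "p \<in> {p. fst p \<in> A \<and> F p \<noteq> p}"
    then have "p \<in> P" using F_out by blast
    then obtain g where g: "g \<in> G1 \<gamma>" "p = \<iota> g" unfolding P_def by blast
    then show "p \<in> \<iota> ` {g \<in> G1 \<gamma>. Gtgt s t \<gamma> g \<in> A}" using p by (auto simp: \<iota>_def)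
  qed
  then show ?thesis using fG finite_subset by blast
qed

end

lemma mult_op_eq: "mult_op \<phi> f = (\<lambda>q. \<phi> (fst q) * f q)"
  by (auto simp: mult_op_def fun_eq_iff)

lemma cmod_diff_sq: "(cmod (a - b))\<^sup>2 \<le> 2 * (cmod a)\<^sup>2 + 2 * (cmod b)\<^sup>2"
proof -
  have "cmod (a - b) \<le> cmod a + cmod b" by (rule norm_triangle_ineq4)
  then have "(cmod (a - b))\<^sup>2 \<le> (cmod a + cmod b)\<^sup>2" by (intro power_mono) auto
  also have "\<dots> \<le> 2 * (cmod a)\<^sup>2 + 2 * (cmod b)\<^sup>2"
    using sum_squares_ge_zero[of "cmod a - cmod b" 0] by (simp add: power2_eq_square algebra_simps)
  finally show ?thesis .
qed

lemma opnorm_zero: fixes T :: "'a op" shows "opnorm (op_diff T T) = 0"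
proof -
  have z: "l2norm (\<lambda>_::'a \<times> nat. 0::complex) = 0"
    using l2_finite_support(2)[of "{}" "\<lambda>_::'a \<times> nat. 0::complex"] by simp
  have l: "is_l2 (\<lambda>_::'a \<times> nat. 0::complex)"
    using l2_finite_support(1)[of "{}" "\<lambda>_::'a \<times> nat. 0::complex"] by simp
  have "{l2norm (op_diff T T f) | f. is_l2 f \<and> l2norm f \<le> 1} = {0}"
    using z l unfolding op_diff_def by force
  then show ?thesis unfolding opnorm_def by simp
qed

context ug_setup
begin

definition "Uo = (\<lambda>(f::'v vec) q. f (H q))"
definition "Vo = (\<lambda>(f::'v vec) q. f (F q))"
definition "Do = op_diff Uo id"

lemma Do_eq: "Do f q = f (H q) - f q"
  by (simp add: Do_def op_diff_def Uo_def)

lemma Uo_bounded: "bounded_op Uo"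
  unfolding bounded_op_def Uo_def using l2_reindex[OF H_props(1)]
  by (auto intro: exI[of _ 1])

lemma Vo_bounded: "bounded_op Vo"
  unfolding bounded_op_def Vo_def using l2_reindex[OF F_bij]
  by (auto intro: exI[of _ 1])

lemma Uo_unitary: "unitary_op Uo"
  unfolding unitary_op_def
proof (intro conjI exI[of _ Vo] Uo_bounded Vo_bounded allI impI)
  fix f g :: "'v vec"
  have "l2inner (Uo f) g = infsum (\<lambda>i. f (H i) * cnj (g i)) UNIV"
    by (simp add: l2inner_def Uo_def)
  also have "\<dots> = infsum (\<lambda>j. f (H (F j)) * cnj (g (F j))) UNIV"
    using infsum_reindex_bij_betw[OF F_bij, of "\<lambda>i. f (H i) * cnj (g i)"] by simp
  also have "\<dots> = l2inner f (Vo g)" by (simp add: l2inner_def Vo_def H_props)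
  finally show "l2inner (Uo f) g = l2inner f (Vo g)" .
next
  fix f :: "'v vec"
  show "Vo (Uo f) = f" by (simp add: Vo_def Uo_def H_props)
  show "Uo (Vo f) = f" by (simp add: Vo_def Uo_def H_props)
qed

lemma Do_bounded: "bounded_op Do"
proof -
  have *: "is_l2 (Do f) \<and> l2norm (Do f) \<le> 2 * l2norm f" if f: "is_l2 f" for f
  proof -
    let ?a = "\<lambda>i. (cmod (f (H i)))\<^sup>2" and ?b = "\<lambda>i. (cmod (f i))\<^sup>2"
    have sa: "?a summable_on UNIV" and sb: "?b summable_on UNIV"
      using f l2_reindex[OF H_props(1), of f] by (auto simp: is_l2_def)
    have ia: "infsum ?a UNIV = infsum ?b UNIV"
      using infsum_reindex_bij_betw[OF H_props(1), of ?b] by simp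
    have sc: "(\<lambda>i. 2 * ?a i + 2 * ?b i) summable_on UNIV"
      by (intro summable_on_add summable_on_cmult_right sa sb)
    have sd: "(\<lambda>i. (cmod (Do f i))\<^sup>2) summable_on UNIV"
      by (rule summable_on_comparison_test[OF sc]) (auto simp: Do_eq cmod_diff_sq)
    have "infsum (\<lambda>i. (cmod (Do f i))\<^sup>2) UNIV \<le> infsum (\<lambda>i. 2 * ?a i + 2 * ?b i) UNIV"
      by (rule infsum_mono[OF sd sc]) (auto simp: Do_eq cmod_diff_sq)
    also have "\<dots> = 2 * infsum ?a UNIV + 2 * infsum ?b UNIV"
      using sa sb by (simp add: infsum_add summable_on_cmult_right infsum_cmult_right)
    also have "\<dots> = 2\<^sup>2 * infsum ?b UNIV" using ia by simp
    finally have "sqrt (infsum (\<lambda>i. (cmod (Do f i))\<^sup>2) UNIV) \<le> sqrt (2\<^sup>2 * infsum ?b UNIV)"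
      using real_sqrt_le_mono by blast
    then have "l2norm (Do f) \<le> 2 * l2norm f" unfolding l2norm_def by (simp add: real_sqrt_mult)
    then show ?thesis using sd by (simp add: is_l2_def)
  qed
  have "Do (\<lambda>i. c * f i + g i) = (\<lambda>i. c * Do f i + Do g i)" for f g c
    by (simp add: Do_eq fun_eq_iff algebra_simps)
  then show ?thesis unfolding bounded_op_def using * by blast
qed

lemma gdist_le1: "(x, y) \<in> adj_rel s t \<or> x = y \<Longrightarrow> gdist s t x y \<le> 1"
proof -
  assume h: "(x, y) \<in> adj_rel s t \<or> x = y"
  show ?thesis
  proof (cases "x = y")
    case True
    have "(x, y) \<in> adj_rel s t ^^ 0" using True by simp
    then have "gdist s t x y \<le> 0" unfolding gdist_def by (rule Least_le)
    then show ?thesis by simp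
  next
    case False
    then have "(x, y) \<in> adj_rel s t ^^ 1" using h by simp
    then show ?thesis unfolding gdist_def by (rule Least_le)
  qed
qed

lemma adj_sym: "(x, y) \<in> adj_rel s t \<Longrightarrow> (y, x) \<in> adj_rel s t"
  unfolding adj_rel_def by auto

lemma Do_fp: "finite_propagation_op s t Do"
  unfolding finite_propagation_op_def
proof (intro exI[of _ "1::nat"] allI impI ext)
  fix \<phi> \<psi> :: "'v \<Rightarrow> complex" and f :: "'v vec" and q
  assume far: "\<forall>x y. \<phi> x \<noteq> 0 \<longrightarrow> \<psi> y \<noteq> 0 \<longrightarrow> 1 < gdist s t x y"
  show "mult_op \<phi> (Do (mult_op \<psi> f)) q = 0"
  proof (cases "H q = q")
    case True then show ?thesis by (simp add: mult_op_eq Do_eq)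
  next
    case False
    let ?p = "H q"
    have "F ?p \<noteq> ?p" using False H_props by simp
    then have "(fst ?p, fst q) \<in> adj_rel s t" using F_adj H_props by metis
    then have "gdist s t (fst q) (fst ?p) \<le> 1" using adj_sym gdist_le1 by blast
    moreover have "gdist s t (fst q) (fst q) \<le> 1" using gdist_le1 by blast
    ultimately have "\<phi> (fst q) = 0 \<or> (\<psi> (fst ?p) = 0 \<and> \<psi> (fst q) = 0)"
      using far by (meson not_le)
    then show ?thesis by (auto simp: mult_op_eq Do_eq)
  qed
qed

lemma phi_bound:
  assumes "finite {x. \<phi> x \<noteq> 0}"
  shows "cmod (\<phi> y) \<le> (\<Sum>x\<in>{x. \<phi> x \<noteq> 0}. cmod (\<phi> x))"
proof (cases "\<phi> y = 0")
  case True then show ?thesis by (simp add: sum_nonneg)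
next
  case False
  then show ?thesis using assms by (intro member_le_sum) auto
qed

lemma Do_lc: "locally_compact_op Do"
  unfolding locally_compact_op_def
proof (intro allI impI conjI)
  fix \<phi> :: "'v \<Rightarrow> complex"
  assume fin: "finite {x. \<phi> x \<noteq> 0}"
  define A where "A = {x. \<phi> x \<noteq> 0}"
  define K where "K = (\<Sum>x\<in>A. cmod (\<phi> x))"
  define M where "M = {p. fst p \<in> A \<and> F p \<noteq> p}"
  have fM: "finite M" unfolding M_def by (rule finite_moved) (simp add: A_def fin)
  have K0: "K \<ge> 0" unfolding K_def by (simp add: sum_nonneg)
  have phK: "cmod (\<phi> y) \<le> K" for y using phi_bound[OF fin] unfolding K_def A_def .
  have lin1: "(Do \<circ> mult_op \<phi>) (\<lambda>i. c * f i + g i) = (\<lambda>i. c * (Do \<circ> mult_op \<phi>) f i + (Do \<circ> mult_op \<phi>) g i)" for f g c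
    by (simp add: Do_eq mult_op_eq fun_eq_iff algebra_simps)
  have lin2: "(mult_op \<phi> \<circ> Do) (\<lambda>i. c * f i + g i) = (\<lambda>i. c * (mult_op \<phi> \<circ> Do) f i + (mult_op \<phi> \<circ> Do) g i)" for f g c
    by (simp add: Do_eq mult_op_eq fun_eq_iff algebra_simps)
  show "compact_op (Do \<circ> mult_op \<phi>)"
  proof (rule compact_fin[where S = "M \<union> F ` M" and K = K and H = H])
    show "finite (M \<union> F ` M)" using fM by simp
    show "K \<ge> 0" by (rule K0)
    fix f q
    show "cmod ((Do \<circ> mult_op \<phi>) f q) \<le> K * (cmod (f (H q)) + cmod (f q))"
    proof -
      have "cmod ((Do \<circ> mult_op \<phi>) f q) \<le> cmod (\<phi> (fst (H q))) * cmod (f (H q)) + cmod (\<phi> (fst q)) * cmod (f q)"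
        by (simp add: Do_eq mult_op_eq norm_mult[symmetric] norm_triangle_ineq4)
      also have "\<dots> \<le> K * cmod (f (H q)) + K * cmod (f q)"
        using phK by (intro add_mono mult_right_mono) auto
      finally show ?thesis by (simp add: algebra_simps)
    qed
    assume q: "q \<notin> M \<union> F ` M"
    show "(Do \<circ> mult_op \<phi>) f q = 0"
    proof (cases "H q = q")
      case True then show ?thesis by (simp add: Do_eq mult_op_eq)
    next
      case False
      have qm: "F q \<noteq> q" using False H_props by metis
      have hm: "F (H q) \<noteq> H q" using False H_props by metis
      have "\<phi> (fst q) = 0" using q qm unfolding M_def A_def by auto
      moreover have "\<phi> (fst (H q)) = 0"
      proof (rule ccontr)
        assume "\<phi> (fst (H q)) \<noteq> 0"
        then have "H q \<in> M" using hm unfolding M_def A_def by auto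
        then have "q \<in> F ` M" using H_props by (metis imageI)
        then show False using q by simp
      qed
      ultimately show ?thesis by (simp add: Do_eq mult_op_eq)
    qed
  qed (rule lin1)
  show "compact_op (mult_op \<phi> \<circ> Do)"
  proof (rule compact_fin[where S = M and K = K and H = H])
    show "finite M" by (rule fM)
    show "K \<ge> 0" by (rule K0)
    fix f q
    show "cmod ((mult_op \<phi> \<circ> Do) f q) \<le> K * (cmod (f (H q)) + cmod (f q))"
    proof -
      have "cmod ((mult_op \<phi> \<circ> Do) f q) = cmod (\<phi> (fst q)) * cmod (f (H q) - f q)"
        by (simp add: Do_eq mult_op_eq norm_mult)
      also have "\<dots> \<le> K * (cmod (f (H q)) + cmod (f q))"
        using phK K0 by (intro mult_mono norm_triangle_ineq4) auto
      finally show ?thesis .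
    qed
    assume q: "q \<notin> M"
    show "(mult_op \<phi> \<circ> Do) f q = 0"
    proof (cases "H q = q")
      case True then show ?thesis by (simp add: Do_eq mult_op_eq)
    next
      case False
      have qm: "F q \<noteq> q" using False H_props by metis
      then have "\<phi> (fst q) = 0" using q unfolding M_def A_def by auto
      then show ?thesis by (simp add: Do_eq mult_op_eq)
    qed
  qed (rule lin2)
qed

lemma Do_roe: "Do \<in> roe_algebra s t"
  unfolding roe_algebra_def
proof (intro CollectI conjI allI impI Do_bounded)
  fix e :: real assume "e > 0"
  then show "\<exists>S. bounded_op S \<and> locally_compact_op S \<and> finite_propagation_op s t S \<and> opnorm (op_diff Do S) < e"
    using Do_bounded Do_lc Do_fp opnorm_zero[of Do] by auto
qed

end


theorem mainTheorem4:
  fixes s t :: "'e \<Rightarrow> 'v"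
    and \<gamma> :: "'e \<Rightarrow> int"
    and \<alpha> :: "'v \<Rightarrow> 'e \<times> nat \<Rightarrow> 'e \<times> nat"
    and \<epsilon> :: "'e \<times> nat \<Rightarrow> nat"
  assumes "connected_graph s t"
    and "locally_finite_graph s t"
    and "is_cycle s t \<gamma>"
    and "\<forall>x. bij_betw (\<alpha> x) (Iset s t \<gamma> x) (Oset s t \<gamma> x)"
    and "inj_on \<epsilon> (G1 \<gamma>)"
  shows "unitary_op (U_gamma s t \<gamma> \<alpha> \<epsilon>) \<and>
         op_diff (U_gamma s t \<gamma> \<alpha> \<epsilon>) id \<in> roe_algebra s t"
proof -
  interpret ug_setup s t \<gamma> \<alpha> \<epsilon> using assms by unfold_locales auto
  have "U_gamma s t \<gamma> \<alpha> \<epsilon> = Uo" using U_eq by (simp add: Uo_def)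
  then show ?thesis using Uo_unitary Do_roe by (simp add: Do_def)
qed

end
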